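(* Let $L\in(0,\infty)$ and for $k\in\mathbb{N}$ put $n_k:=\lfloor (k/L)^2\rfloor$. Let $x\in F(1/2,1)$ and $\epsilon\in(0,\infty)$ small. Then for all sufficiently large $k$, $$(1-\epsilon)\,e^{k/L}\ \le\ S_{n_k}(x)-S_{n_{k-1}}(x)\ \le\ (1+\epsilon)\Big(\frac{k}{L}\Big)^2 e^{k/L}.$$
   Context: Every $x\in(0,1)\setminus\mathbb{Q}$ has a unique infinite continued fraction expansion $x=[a_1(x),a_2(x),\dots]$ with partial quotients $a_i(x)\in\mathbb{N}=\{1,2,\dots\}$. For $n\in\mathbb{N}$ let $T_n(x):=\max\{a_k(x):1\le k\le n\}$ and $S_n(x):=\sum_{j=1}^n a_j(x)$. Define $$F(1/2,1):=\Big\{x\in(0,1)\setminus\mathbb{Q}:\ \lim_{n\to\infty}\frac{T_n(x)}{e^{\sqrt{n}}}=1\Big\}.$$ *)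

theory Defs
  imports Complex_Main
begin

definition gauss :: "real \<Rightarrow> real" where
  "gauss y = frac (1 / y)"

definition cf_pq :: "nat \<Rightarrow> real \<Rightarrow> nat" where
  "cf_pq n x = nat \<lfloor>1 / (gauss ^^ (n - 1)) x\<rfloor>"

definition cf_T :: "nat \<Rightarrow> real \<Rightarrow> nat" where
  "cf_T n x = Max {cf_pq k x | k. 1 \<le> k \<and> k \<le> n}"

definition cf_S :: "nat \<Rightarrow> real \<Rightarrow> nat" where
  "cf_S n x = (\<Sum>j=1..n. cf_pq j x)"

definition F_half_one :: "real set" where
  "F_half_one = {x. 0 < x \<and> x < 1 \<and> x \<notin> \<rat> \<and>
      ((\<lambda>n. real (cf_T n x) / exp (sqrt (real n))) \<longlonglongrightarrow> 1)}"

end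

theory Submission
  imports Defs
begin

lemma T_attained:
  assumes "1 \<le> n"
  shows "\<exists>k. 1 \<le> k \<and> k \<le> n \<and> cf_pq k x = cf_T n x"
proof -
  have eq: "{cf_pq k x | k. 1 \<le> k \<and> k \<le> n} = (\<lambda>k. cf_pq k x) ` {1..n}" by auto
  have "Max ((\<lambda>k. cf_pq k x) ` {1..n}) \<in> (\<lambda>k. cf_pq k x) ` {1..n}"
    using assms by (intro Max_in) auto
  then show ?thesis unfolding cf_T_def eq by auto
qed

lemma T_ge:
  assumes "1 \<le> k" "k \<le> n"
  shows "cf_pq k x \<le> cf_T n x"
proof -
  have eq: "{cf_pq k x | k. 1 \<le> k \<and> k \<le> n} = (\<lambda>k. cf_pq k x) ` {1..n}" by auto
  show ?thesis unfolding cf_T_def eq using assms by (intro Max_ge) auto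
qed

lemma S_diff:
  assumes "n \<le> m"
  shows "real (cf_S m x) - real (cf_S n x) = (\<Sum>j\<in>{n<..m}. real (cf_pq j x))"
  using assms
proof (induction m rule: dec_induct)
  case base
  then show ?case by simp
next
  case (step m)
  have "real (cf_S (Suc m) x) = real (cf_S m x) + real (cf_pq (Suc m) x)"
    unfolding cf_S_def by simp
  moreover have "{n<..Suc m} = insert (Suc m) {n<..m}" using step by auto
  ultimately show ?case using step by simp
qed

lemma lower_bd:
  assumes "1 \<le> n" "n \<le> m" "cf_T n x < cf_T m x"
  shows "real (cf_T m x) \<le> real (cf_S m x) - real (cf_S n x)"
proof -
  obtain k where k: "1 \<le> k" "k \<le> m" "cf_pq k x = cf_T m x"
    using T_attained[of m x] assms by auto
  have "n < k"
  proof (rule ccontr)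
    assume "\<not> n < k"
    then have "cf_pq k x \<le> cf_T n x" using T_ge[of k n x] k by auto
    then show False using k assms by simp
  qed
  then have "real (cf_pq k x) \<le> (\<Sum>j\<in>{n<..m}. real (cf_pq j x))"
    using k by (intro member_le_sum) auto
  then show ?thesis using S_diff[OF assms(2)] k by simp
qed

lemma upper_bd:
  shows "real (cf_S m x) - real (cf_S n x) \<le> real m * real (cf_T m x)"
proof -
  have "real (cf_S m x) = (\<Sum>j\<in>{1..m}. real (cf_pq j x))" unfolding cf_S_def by simp
  also have "\<dots> \<le> (\<Sum>j\<in>{1..m}. real (cf_T m x))"
    by (intro sum_mono) (use T_ge in auto)
  also have "\<dots> = real m * real (cf_T m x)" by simp
  finally show ?thesis by simp
qed

theorem corollary1:
  fixes L \<epsilon> x :: real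
  assumes "0 < L" and "x \<in> F_half_one" and "0 < \<epsilon>"
  defines "nk \<equiv> (\<lambda>k::nat. nat \<lfloor>(real k / L)^2\<rfloor>)"
  shows "\<forall>\<^sub>F k in sequentially.
     (1 - \<epsilon>) * exp (real k / L) \<le> real (cf_S (nk k) x) - real (cf_S (nk (k - 1)) x) \<and>
     real (cf_S (nk k) x) - real (cf_S (nk (k - 1)) x) \<le> (1 + \<epsilon>) * (real k / L)^2 * exp (real k / L)"
proof -
  define f where "f n = real (cf_T n x) / exp (sqrt (real n))" for n
  have ftend: "f \<longlonglongrightarrow> 1" using assms(2) unfolding F_half_one_def f_def by auto
  have nk_le: "real (nk k) \<le> (real k / L)^2" for k
    unfolding nk_def by simp
  have nk_ge: "(real k / L)^2 - 1 < real (nk k)" for k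
    unfolding nk_def by (simp add: of_nat_nat)
  have nk_mono: "nk a \<le> nk b" if "a \<le> b" for a b
  proof -
    have "real a / L \<le> real b / L" using that assms(1) by (simp add: divide_right_mono)
    then have "(real a / L)^2 \<le> (real b / L)^2" using assms(1) by (intro power_mono) auto
    then show ?thesis unfolding nk_def by (intro nat_mono floor_mono)
  qed
  have nk_lim: "filterlim nk sequentially sequentially"
    unfolding filterlim_at_top
  proof
    fix Z :: nat
    have "Z \<le> nk k" if "k \<ge> nat \<lceil>L * (real Z + 1)\<rceil>" for k
    proof -
      have "real k \<ge> L * (real Z + 1)" using that by linarith
      then have "real k / L \<ge> real Z + 1" using assms(1) by (simp add: field_simps)
      then have "(real k / L)^2 \<ge> (real Z + 1)^2" by (intro power_mono) auto
      moreover have "(real Z + 1)^2 \<ge> real Z + 1" by (simp add: power2_eq_square)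
      ultimately show ?thesis using nk_ge[of k] by linarith
    qed
    then show "\<forall>\<^sub>F k in sequentially. Z \<le> nk k" unfolding eventually_sequentially by blast
  qed
  have shift_lim: "filterlim (\<lambda>k::nat. k - 1) sequentially sequentially"
    unfolding filterlim_at_top eventually_sequentially
  proof (intro allI)
    fix Z :: nat
    show "\<exists>N. \<forall>n\<ge>N. Z \<le> n - 1" by (rule exI[of _ "Suc Z"]) auto
  qed
  have sq_bd: "0 \<le> real k / L - sqrt (real (nk k)) \<and> real k / L - sqrt (real (nk k)) \<le> L / real k"
    if "k > 0" for k
  proof -
    define y where "y = real k / L"
    define s where "s = sqrt (real (nk k))"
    have ypos: "y > 0" using that assms(1) unfolding y_def by simp
    have s0: "s \<ge> 0" unfolding s_def by simp
    have ss: "s^2 = real (nk k)" unfolding s_def by simp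
    have "s \<le> sqrt (y^2)" unfolding s_def y_def using nk_le[of k] by (intro real_sqrt_le_mono)
    then have sy: "s \<le> y" using ypos by simp
    have "(y - s) * y \<le> (y - s) * (y + s)" using sy s0 by (intro mult_left_mono) auto
    also have "\<dots> = y^2 - s^2" by (simp add: power2_eq_square algebra_simps)
    also have "\<dots> < 1" using ss nk_ge[of k] unfolding y_def by simp
    finally have "y - s < 1 / y" using ypos by (simp add: field_simps)
    moreover have "1 / y = L / real k" unfolding y_def by simp
    ultimately show ?thesis using sy unfolding y_def s_def by simp
  qed
  have d0: "(\<lambda>k. real k / L - sqrt (real (nk k))) \<longlonglongrightarrow> 0"
  proof (rule tendsto_sandwich[of "\<lambda>_. 0" _ _ "\<lambda>k. L / real k"])
    show "\<forall>\<^sub>F k in sequentially. 0 \<le> real k / L - sqrt (real (nk k))"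
      using sq_bd unfolding eventually_sequentially by (intro exI[of _ 1]) auto
    show "\<forall>\<^sub>F k in sequentially. real k / L - sqrt (real (nk k)) \<le> L / real k"
      using sq_bd unfolding eventually_sequentially by (intro exI[of _ 1]) auto
  qed (auto intro: lim_const_over_n)
  have e1: "(\<lambda>k. exp (sqrt (real (nk k)) - real k / L)) \<longlonglongrightarrow> 1"
  proof -
    have "(\<lambda>k. - (real k / L - sqrt (real (nk k)))) \<longlonglongrightarrow> - 0"
      by (intro tendsto_minus d0)
    then have "(\<lambda>k. exp (- (real k / L - sqrt (real (nk k))))) \<longlonglongrightarrow> exp (- 0)"
      by (intro tendsto_exp)
    then show ?thesis by simp
  qed
  define g where "g k = real (cf_T (nk k) x) / exp (real k / L)" for k
  have g_eq: "g k = f (nk k) * exp (sqrt (real (nk k)) - real k / L)" for k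
    unfolding g_def f_def by (simp add: exp_diff)
  have gtend: "g \<longlonglongrightarrow> 1"
  proof -
    have "(\<lambda>k. f (nk k) * exp (sqrt (real (nk k)) - real k / L)) \<longlonglongrightarrow> 1 * 1"
      by (intro tendsto_mult e1 filterlim_compose[OF ftend nk_lim])
    then show ?thesis unfolding g_eq by simp
  qed
  have htend: "(\<lambda>k. g (k - 1) * exp (- 1 / L)) \<longlonglongrightarrow> 1 * exp (- 1 / L)"
    by (intro tendsto_mult tendsto_const filterlim_compose[OF gtend shift_lim])
  have r_eq: "real (cf_T (nk (k - 1)) x) / exp (real k / L) = g (k - 1) * exp (- 1 / L)"
    if "k \<ge> 1" for k
  proof -
    have "real (k - 1) = real k - 1" using that by simp
    then have "exp (real k / L) = exp (real (k - 1) / L) * exp (1 / L)"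
      using assms(1) by (simp add: exp_add[symmetric] field_simps)
    then show ?thesis unfolding g_def by (simp add: exp_minus field_simps)
  qed
  define c where "c = (1 + exp (- 1 / L)) / 2"
  have elt: "exp (- 1 / L) < 1" using assms(1) by simp
  have c1: "c < 1" "exp (-1/L) < c" using elt unfolding c_def by auto
  have ev1: "\<forall>\<^sub>F k in sequentially. g k > c" using order_tendstoD(1)[OF gtend c1(1)] .
  have ev2: "\<forall>\<^sub>F k in sequentially. g (k - 1) * exp (- 1 / L) < c"
    using order_tendstoD(2)[OF htend] c1(2) by simp
  have ev3: "\<forall>\<^sub>F k in sequentially. g k > 1 - \<epsilon>"
    using order_tendstoD(1)[OF gtend] assms(3) by simp
  have ev4: "\<forall>\<^sub>F k in sequentially. g k < 1 + \<epsilon>"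
    using order_tendstoD(2)[OF gtend] assms(3) by simp
  have ev5: "\<forall>\<^sub>F k in sequentially. 1 \<le> nk (k - 1)"
    using filterlim_compose[OF nk_lim shift_lim] unfolding filterlim_at_top by auto
  have ev6: "\<forall>\<^sub>F k in sequentially. (1::nat) \<le> k"
    unfolding eventually_sequentially by auto
  show ?thesis
    using ev1 ev2 ev3 ev4 ev5 ev6
  proof eventually_elim
    case (elim k)
    define E where "E = exp (real k / L)"
    have Epos: "E > 0" unfolding E_def by simp
    have TkE: "real (cf_T (nk k) x) = g k * E" unfolding g_def E_def by simp
    have Tk1E: "real (cf_T (nk (k - 1)) x) = g (k - 1) * exp (- 1 / L) * E"
      using r_eq[OF elim(6)] Epos unfolding E_def by (simp add: field_simps)
    have mono: "nk (k - 1) \<le> nk k" by (intro nk_mono) auto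
    have "g (k - 1) * exp (- 1 / L) * E < g k * E"
      using elim(1,2) Epos by (intro mult_strict_right_mono) auto
    then have lt: "cf_T (nk (k - 1)) x < cf_T (nk k) x" using TkE Tk1E by simp
    have L1: "real (cf_T (nk k) x) \<le> real (cf_S (nk k) x) - real (cf_S (nk (k - 1)) x)"
      by (rule lower_bd[OF elim(5) mono lt])
    have "(1 - \<epsilon>) * E \<le> g k * E" using elim(3) Epos by (intro mult_right_mono) auto
    then have A: "(1 - \<epsilon>) * E \<le> real (cf_S (nk k) x) - real (cf_S (nk (k - 1)) x)"
      using L1 TkE by simp
    have U1: "real (cf_S (nk k) x) - real (cf_S (nk (k - 1)) x) \<le> real (nk k) * real (cf_T (nk k) x)"
      by (rule upper_bd)
    have "real (cf_T (nk k) x) \<le> (1 + \<epsilon>) * E"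
      using TkE elim(4) Epos by (simp add: mult_right_mono)
    then have "real (nk k) * real (cf_T (nk k) x) \<le> (real k / L)^2 * ((1 + \<epsilon>) * E)"
      using nk_le[of k] by (intro mult_mono) auto
    then have B: "real (cf_S (nk k) x) - real (cf_S (nk (k - 1)) x) \<le> (1 + \<epsilon>) * (real k / L)^2 * E"
      using U1 by (simp add: algebra_simps)
    show ?case using A B unfolding E_def by simp
  qed
qed

end
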